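(* Let $E$ be a topological space and $C:E\to 2^E$ a constraint function. Let $\mathcal{U}$ and $\mathcal{V}$ be collections of subsets of $E$ such that $\mathcal{U}$ is a refinement of $\mathcal{V}$, i.e. each $U\in\mathcal{U}$ is a subset of some $V\in\mathcal{V}$. Then this induces an order preserving function $TP_C(\mathcal{U})\to TP_C(\mathcal{V})$: namely, for any function $\phi:\mathcal{U}\to\mathcal{V}$ with $A\subseteq\phi(A)$ for all $A\in\mathcal{U}$, the assignment $[A]\mapsto[\phi(A)]$ is a well-defined order preserving map $TP_C(\mathcal{U})\to TP_C(\mathcal{V})$.
   Context: A set-valued function $C:E\to 2^E$ on a topological space $E$ is a constraint function if $x\in C(x)$ for all $x\in E$ and $C$ is lower semicontinuous: for every open $U\subseteq E$ the set $\{x\in E: C(x)\cap U\neq\emptyset\}$ is open. For $U\subseteq E$ write $C(U)=\bigcup_{x\in U}C(x)$. For subsets $A,B\subseteq E$ write $A\prec B$ if for every open set $U$ containing $A$, $C(U)\cap B\neq\emptyset$. Given a collection $\mathcal{U}$ of subsets of $E$, the constraint graph $TG_C(\mathcal{U})$ is the directed graph with vertex set $\mathcal{U}$ and an edge $(A,B)$ whenever $A\prec B$. The tracklet poset $TP_C(\mathcal{U})$ is the set of equivalence classes $[A]$ of the preorder given by the transitive closure of the edge relation of $TG_C(\mathcal{U})$ (where $A,B$ are equivalent if each precedes the other in the transitive closure), ordered by $[A]\le[B]$ iff $A$ precedes $B$ in the transitive closure. *)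

theory Defs
  imports "HOL-Analysis.Analysis"
begin

text \<open>Constraint function on the topological space X: C x \<subseteq> E, x \<in> C x, and C is
  lower semicontinuous.\<close>
definition constraint_fun :: "'a topology \<Rightarrow> ('a \<Rightarrow> 'a set) \<Rightarrow> bool" where
  "constraint_fun X C \<longleftrightarrow>
     (\<forall>x\<in>topspace X. x \<in> C x \<and> C x \<subseteq> topspace X) \<and>
     (\<forall>U. openin X U \<longrightarrow> openin X {x \<in> topspace X. C x \<inter> U \<noteq> {}})"

definition Cimage :: "('a \<Rightarrow> 'a set) \<Rightarrow> 'a set \<Rightarrow> 'a set" where
  "Cimage C U = (\<Union>x\<in>U. C x)"

definition cprec :: "'a topology \<Rightarrow> ('a \<Rightarrow> 'a set) \<Rightarrow> 'a set \<Rightarrow> 'a set \<Rightarrow> bool" where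
  "cprec X C A B \<longleftrightarrow> (\<forall>U. openin X U \<and> A \<subseteq> U \<longrightarrow> Cimage C U \<inter> B \<noteq> {})"

definition tg_edges :: "'a topology \<Rightarrow> ('a \<Rightarrow> 'a set) \<Rightarrow> 'a set set \<Rightarrow> ('a set \<times> 'a set) set" where
  "tg_edges X C \<U> = {(A, B). A \<in> \<U> \<and> B \<in> \<U> \<and> cprec X C A B}"

definition tp_rel :: "'a topology \<Rightarrow> ('a \<Rightarrow> 'a set) \<Rightarrow> 'a set set \<Rightarrow> ('a set \<times> 'a set) set" where
  "tp_rel X C \<U> = Id_on \<U> \<union> (tg_edges X C \<U>)\<^sup>+"

definition tp_equiv :: "'a topology \<Rightarrow> ('a \<Rightarrow> 'a set) \<Rightarrow> 'a set set \<Rightarrow> ('a set \<times> 'a set) set" where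
  "tp_equiv X C \<U> = {(A, B). (A, B) \<in> tp_rel X C \<U> \<and> (B, A) \<in> tp_rel X C \<U>}"

definition TP :: "'a topology \<Rightarrow> ('a \<Rightarrow> 'a set) \<Rightarrow> 'a set set \<Rightarrow> 'a set set set" where
  "TP X C \<U> = \<U> // tp_equiv X C \<U>"

definition tp_le :: "'a topology \<Rightarrow> ('a \<Rightarrow> 'a set) \<Rightarrow> 'a set set \<Rightarrow> 'a set set \<Rightarrow> 'a set set \<Rightarrow> bool" where
  "tp_le X C \<U> P Q \<longleftrightarrow> (\<exists>A\<in>P. \<exists>B\<in>Q. (A, B) \<in> tp_rel X C \<U>)"

end

theory Submission
  imports Defs
begin

lemma tp_rel_sub: "tp_rel X C U \<subseteq> U \<times> U"
proof -
  have "tg_edges X C U \<subseteq> U \<times> U" unfolding tg_edges_def by auto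
  hence "(tg_edges X C U)\<^sup>+ \<subseteq> U \<times> U" using trancl_subset_Sigma by blast
  thus ?thesis unfolding tp_rel_def by auto
qed

lemma tp_rel_trans: "trans (tp_rel X C U)"
  unfolding tp_rel_def trans_def by (auto intro: trancl_trans)

lemma tp_equiv_equiv: "equiv U (tp_equiv X C U)"
proof -
  have "refl_on U (tp_equiv X C U)"
    using tp_rel_sub[of X C U] unfolding refl_on_def tp_equiv_def tp_rel_def by auto
  moreover have "sym (tp_equiv X C U)" unfolding sym_def tp_equiv_def by auto
  moreover have "trans (tp_equiv X C U)"
    using tp_rel_trans[of X C U] unfolding trans_def tp_equiv_def by blast
  moreover have "tp_equiv X C U \<subseteq> U \<times> U"
    using tp_rel_sub[of X C U] unfolding tp_equiv_def by auto
  ultimately show ?thesis by (simp add: equiv_def refl_on_def)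
qed

lemma cprec_mono: "cprec X C A B \<Longrightarrow> A \<subseteq> A' \<Longrightarrow> B \<subseteq> B' \<Longrightarrow> cprec X C A' B'"
  unfolding cprec_def by blast

lemma tp_rel_map:
  assumes "\<phi> \<in> U \<rightarrow> V" "\<forall>A\<in>U. A \<subseteq> \<phi> A" "(a, b) \<in> tp_rel X C U"
  shows "(\<phi> a, \<phi> b) \<in> tp_rel X C V"
proof -
  have "(\<phi> a, \<phi> b) \<in> (tg_edges X C V)\<^sup>+" if "(a, b) \<in> (tg_edges X C U)\<^sup>+"
    using that
  proof (induction rule: trancl_induct)
    case (base y)
    then have e: "a \<in> U" "y \<in> U" "cprec X C a y" unfolding tg_edges_def by auto
    have "cprec X C (\<phi> a) (\<phi> y)" using cprec_mono[OF e(3)] e(1,2) assms(2) by blast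
    moreover have "\<phi> a \<in> V" "\<phi> y \<in> V" using e(1,2) assms(1) by auto
    ultimately have "(\<phi> a, \<phi> y) \<in> tg_edges X C V" unfolding tg_edges_def by blast
    then show ?case by blast
  next
    case (step y z)
    then have e: "y \<in> U" "z \<in> U" "cprec X C y z" unfolding tg_edges_def by auto
    have "cprec X C (\<phi> y) (\<phi> z)" using cprec_mono[OF e(3)] e(1,2) assms(2) by blast
    moreover have "\<phi> y \<in> V" "\<phi> z \<in> V" using e(1,2) assms(1) by auto
    ultimately have "(\<phi> y, \<phi> z) \<in> tg_edges X C V" unfolding tg_edges_def by blast
    then show ?case using step by (meson trancl_into_trancl)
  qed
  then show ?thesis using assms unfolding tp_rel_def by auto
qed

theorem proposition1:
  fixes X :: "'a topology" and C :: "'a \<Rightarrow> 'a set"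
    and \<U> \<V> :: "'a set set" and \<phi> :: "'a set \<Rightarrow> 'a set"
  assumes "constraint_fun X C"
    and "\<U> \<subseteq> Pow (topspace X)" and "\<V> \<subseteq> Pow (topspace X)"
    and "\<forall>U\<in>\<U>. \<exists>V\<in>\<V>. U \<subseteq> V"
    and "\<phi> \<in> \<U> \<rightarrow> \<V>" and "\<forall>A\<in>\<U>. A \<subseteq> \<phi> A"
  shows "\<exists>f. f \<in> TP X C \<U> \<rightarrow> TP X C \<V> \<and>
           (\<forall>A\<in>\<U>. f (tp_equiv X C \<U> `` {A}) = tp_equiv X C \<V> `` {\<phi> A}) \<and>
           (\<forall>P\<in>TP X C \<U>. \<forall>Q\<in>TP X C \<U>. tp_le X C \<U> P Q \<longrightarrow> tp_le X C \<V> (f P) (f Q))"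
proof -
  let ?EU = "tp_equiv X C \<U>" and ?EV = "tp_equiv X C \<V>"
  have eU: "equiv \<U> ?EU" and eV: "equiv \<V> ?EV" by (rule tp_equiv_equiv)+
  define f where "f P = ?EV `` {\<phi> (SOME A. A \<in> P)}" for P
  have eqmap: "(\<phi> a, \<phi> b) \<in> ?EV" if "(a, b) \<in> ?EU" for a b
    using that tp_rel_map[OF assms(5,6)] unfolding tp_equiv_def by auto
  have key: "f P = ?EV `` {\<phi> A}" if PT: "P \<in> TP X C \<U>" and AP: "A \<in> P" for P A
  proof -
    obtain a where a: "a \<in> \<U>" "P = ?EU `` {a}" using PT unfolding TP_def
      by (auto elim!: quotientE)
    have "(a, A) \<in> ?EU" using a AP by simp
    hence P: "P = ?EU `` {A}" using a(2) equiv_class_eq[OF eU] by simp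
    have "(SOME A. A \<in> P) \<in> P" using that by (meson someI)
    hence "(A, SOME A. A \<in> P) \<in> ?EU" using P by auto
    hence "(\<phi> A, \<phi> (SOME A. A \<in> P)) \<in> ?EV" by (rule eqmap)
    thus ?thesis unfolding f_def using equiv_class_eq[OF eV] by simp
  qed
  have cls: "A \<in> ?EU `` {A}" if "A \<in> \<U>" for A
    by (rule equiv_class_self[OF eU that])
  have clsV: "B \<in> ?EV `` {B}" if "B \<in> \<V>" for B
    by (rule equiv_class_self[OF eV that])
  have nonempty: "\<exists>A. A \<in> P \<and> A \<in> \<U>" if "P \<in> TP X C \<U>" for P
    using that cls unfolding TP_def by (auto elim!: quotientE)
  show ?thesis
  proof (intro exI conjI ballI impI)
    show "f \<in> TP X C \<U> \<rightarrow> TP X C \<V>"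
    proof
      fix P assume P: "P \<in> TP X C \<U>"
      then obtain A where A: "A \<in> P" "A \<in> \<U>" using nonempty by blast
      have "\<phi> A \<in> \<V>" using A assms(5) by auto
      then show "f P \<in> TP X C \<V>" using key[OF P A(1)] unfolding TP_def
        by (simp add: quotientI)
    qed
  next
    fix A assume A: "A \<in> \<U>"
    have "?EU `` {A} \<in> TP X C \<U>" using A unfolding TP_def by (simp add: quotientI)
    then show "f (?EU `` {A}) = ?EV `` {\<phi> A}" using key cls[OF A] by blast
  next
    fix P Q assume P: "P \<in> TP X C \<U>" and Q: "Q \<in> TP X C \<U>" and le: "tp_le X C \<U> P Q"
    then obtain A B where AB: "A \<in> P" "B \<in> Q" "(A, B) \<in> tp_rel X C \<U>"
      unfolding tp_le_def by blast
    have "A \<in> \<U>" "B \<in> \<U>" using AB(3) tp_rel_sub by blast+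
    hence "\<phi> A \<in> \<V>" "\<phi> B \<in> \<V>" using assms(5) by auto
    moreover have "(\<phi> A, \<phi> B) \<in> tp_rel X C \<V>" using tp_rel_map[OF assms(5,6) AB(3)] .
    ultimately show "tp_le X C \<V> (f P) (f Q)"
      unfolding tp_le_def key[OF P AB(1)] key[OF Q AB(2)] using clsV by blast
  qed
qed

end
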